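(* Let $T$ be a locally compact Hausdorff space and $\tau : T\to T$ a proper local homeomorphism. Then $(T,\tau)$ is topologically free if and only if the topological graph $E = (T,T,\tau,\mathrm{id})$ is topologically free.
   Context: $(T,\tau)$ is topologically free if for all $m\neq n\in\mathbb{N}$ the set $H_{m,n} := \{t\in T : \tau^m(t) = \tau^n(t)\}$ has empty interior. The topological graph $E = (E^0,E^1,d,r)$ has vertex space $E^0 = T$, edge space $E^1 = T$, source map $d = \tau$ and range map $r = \mathrm{id}$. A path of length $n\ge1$ in $E$ is $e = (e_1,\dots,e_n)$ with $e_k\in E^1$ and $d(e_k) = r(e_{k+1})$; it is a loop if $r(e_1) = d(e_n)$, with base point $r(e_1)$. An entry of a loop $e$ is an edge $f\in E^1$ with $r(f) = r(e_k)$ and $f\neq e_k$ for some $k$. The topological graph $E$ is topologically free if the set of base points of loops without entries has empty interior in $E^0$. *)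

theory Defs
  imports "HOL-Analysis.Analysis"
begin

definition proper_cont_map :: "'a topology \<Rightarrow> 'b topology \<Rightarrow> ('a \<Rightarrow> 'b) \<Rightarrow> bool" where
  "proper_cont_map X Y f \<longleftrightarrow> continuous_map X Y f \<and>
     (\<forall>K. compactin Y K \<longrightarrow> compactin X {x \<in> topspace X. f x \<in> K})"

definition local_homeomorphism :: "'a topology \<Rightarrow> 'b topology \<Rightarrow> ('a \<Rightarrow> 'b) \<Rightarrow> bool" where
  "local_homeomorphism X Y f \<longleftrightarrow> continuous_map X Y f \<and>
     (\<forall>x \<in> topspace X. \<exists>U. openin X U \<and> x \<in> U \<and> openin Y (f ` U) \<and>
        homeomorphic_map (subtopology X U) (subtopology Y (f ` U)) f)"

text \<open>Topological freeness of the dynamical system (T, tau); N includes 0.\<close>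
definition dyn_topologically_free :: "'a topology \<Rightarrow> ('a \<Rightarrow> 'a) \<Rightarrow> bool" where
  "dyn_topologically_free X \<tau> \<longleftrightarrow>
     (\<forall>m n::nat. m \<noteq> n \<longrightarrow> X interior_of {t \<in> topspace X. (\<tau> ^^ m) t = (\<tau> ^^ n) t} = {})"

text \<open>Topological graphs: edge space E1 (a set), source d, range r.
  A path of length n \<ge> 1 is e 1, ..., e n.\<close>
definition tg_path :: "'e set \<Rightarrow> ('e \<Rightarrow> 'v) \<Rightarrow> ('e \<Rightarrow> 'v) \<Rightarrow> nat \<Rightarrow> (nat \<Rightarrow> 'e) \<Rightarrow> bool" where
  "tg_path E1 d r n e \<longleftrightarrow> n \<ge> 1 \<and> (\<forall>k\<in>{1..n}. e k \<in> E1) \<and>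
     (\<forall>k\<in>{1..<n}. d (e k) = r (e (Suc k)))"

definition tg_loop :: "'e set \<Rightarrow> ('e \<Rightarrow> 'v) \<Rightarrow> ('e \<Rightarrow> 'v) \<Rightarrow> nat \<Rightarrow> (nat \<Rightarrow> 'e) \<Rightarrow> bool" where
  "tg_loop E1 d r n e \<longleftrightarrow> tg_path E1 d r n e \<and> r (e 1) = d (e n)"

definition tg_entry :: "'e set \<Rightarrow> ('e \<Rightarrow> 'v) \<Rightarrow> nat \<Rightarrow> (nat \<Rightarrow> 'e) \<Rightarrow> 'e \<Rightarrow> bool" where
  "tg_entry E1 r n e f \<longleftrightarrow> f \<in> E1 \<and> (\<exists>k\<in>{1..n}. r f = r (e k) \<and> f \<noteq> e k)"

definition tg_topologically_free ::
  "'v topology \<Rightarrow> 'e set \<Rightarrow> ('e \<Rightarrow> 'v) \<Rightarrow> ('e \<Rightarrow> 'v) \<Rightarrow> bool" where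
  "tg_topologically_free E0 E1 d r \<longleftrightarrow>
     E0 interior_of {v. \<exists>n e. tg_loop E1 d r n e \<and> r (e 1) = v \<and> \<not> (\<exists>f. tg_entry E1 r n e f)} = {}"

end

theory Submission
  imports Defs
begin

lemma iter_cont: "continuous_map X X f \<Longrightarrow> continuous_map X X (f ^^ n)"
  by (induction n) (auto simp: funpow_Suc_right intro: continuous_map_compose)

lemma iter_open: "open_map X X f \<Longrightarrow> open_map X X (f ^^ n)"
  by (induction n) (auto simp: funpow_Suc_right open_map_id intro: open_map_compose)

lemma lh_open_map:
  assumes "local_homeomorphism X X f"
  shows "open_map X X f"
  unfolding open_map_def
proof (intro allI impI)
  fix V assume V: "openin X V"
  show "openin X (f ` V)"
    unfolding openin_subopen[of X "f ` V"]
  proof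
    fix y assume "y \<in> f ` V"
    then obtain x where x: "x \<in> V" "y = f x" by auto
    have "x \<in> topspace X" using V x openin_subset by blast
    then obtain U where U: "openin X U" "x \<in> U" "openin X (f ` U)"
      "homeomorphic_map (subtopology X U) (subtopology X (f ` U)) f"
      using assms unfolding local_homeomorphism_def by blast
    have "openin (subtopology X U) (V \<inter> U)"
      using V openin_subtopology_Int by blast
    then have "openin (subtopology X (f ` U)) (f ` (V \<inter> U))"
      using U(4) homeomorphic_imp_open_map open_map_def by blast
    then have "openin X (f ` (V \<inter> U))" using U(3) openin_trans_full by blast
    then show "\<exists>T. openin X T \<and> y \<in> T \<and> T \<subseteq> f ` V"
      using x U(2) by blast
  qed
qed

lemma path_iter0:
  assumes "tg_path E1 \<tau> id n e"
  shows "Suc k \<le> n \<Longrightarrow> e (Suc k) = (\<tau> ^^ k) (e 1)"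
proof (induction k)
  case 0 then show ?case by simp
next
  case (Suc k)
  have "Suc k \<in> {1..<n}" using Suc.prems by simp
  then have "\<tau> (e (Suc k)) = e (Suc (Suc k))" using assms unfolding tg_path_def by simp
  then show ?case using Suc by simp
qed

lemma path_iter:
  assumes "tg_path E1 \<tau> id n e" "1 \<le> k" "k \<le> n"
  shows "e k = (\<tau> ^^ (k - 1)) (e 1)"
  using path_iter0[OF assms(1), of "k - 1"] assms(2,3) by simp

lemma base_set:
  assumes "continuous_map X X \<tau>"
  shows "{v. \<exists>n e. tg_loop (topspace X) \<tau> id n e \<and> id (e 1) = v \<and> \<not> (\<exists>f. tg_entry (topspace X) id n e f)}
     = (\<Union>n\<in>{1..}. {t \<in> topspace X. (\<tau> ^^ n) t = t})"
proof (intro equalityI subsetI)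
  fix v assume "v \<in> {v. \<exists>n e. tg_loop (topspace X) \<tau> id n e \<and> id (e 1) = v \<and> \<not> (\<exists>f. tg_entry (topspace X) id n e f)}"
  then obtain n e where L: "tg_loop (topspace X) \<tau> id n e" "e 1 = v" by auto
  then have P: "tg_path (topspace X) \<tau> id n e" and n: "n \<ge> 1" and c: "e 1 = \<tau> (e n)"
    unfolding tg_loop_def tg_path_def by auto
  have "e n = (\<tau> ^^ (n - 1)) (e 1)" using path_iter[OF P _ order_refl] n by simp
  moreover have "n = Suc (n - 1)" using n by simp
  ultimately have "(\<tau> ^^ n) v = \<tau> (e n)" using L(2)
    by (metis comp_apply funpow.simps(2))
  then have "(\<tau> ^^ n) v = v" using c L(2) by simp
  moreover have "v \<in> topspace X" using P n L(2) unfolding tg_path_def by auto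
  ultimately show "v \<in> (\<Union>n\<in>{1..}. {t \<in> topspace X. (\<tau> ^^ n) t = t})" using n by auto
next
  fix v assume "v \<in> (\<Union>n\<in>{1..}. {t \<in> topspace X. (\<tau> ^^ n) t = t})"
  then obtain n where n: "n \<ge> 1" "v \<in> topspace X" "(\<tau> ^^ n) v = v" by auto
  define e where "e = (\<lambda>k. (\<tau> ^^ (k - 1)) v)"
  have "tg_path (topspace X) \<tau> id n e"
    unfolding tg_path_def
  proof (intro conjI ballI)
    show "1 \<le> n" using n by simp
  next
    fix k assume "k \<in> {1..n}"
    show "e k \<in> topspace X" unfolding e_def
      using iter_cont[OF assms, of "k - 1"] n(2) by (simp add: continuous_map_def Pi_iff)
  next
    fix k assume k: "k \<in> {1..<n}"
    then have "k = Suc (k - 1)" by simp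
    then have "(\<tau> ^^ k) v = \<tau> ((\<tau> ^^ (k - 1)) v)" by (metis comp_apply funpow.simps(2))
    then show "\<tau> (e k) = id (e (Suc k))" unfolding e_def by simp
  qed
  moreover have "id (e 1) = \<tau> (e n)"
  proof -
    have "n = Suc (n - 1)" using n by simp
    then have "(\<tau> ^^ n) v = \<tau> ((\<tau> ^^ (n - 1)) v)" by (metis comp_apply funpow.simps(2))
    then show ?thesis using n unfolding e_def by simp
  qed
  ultimately have "tg_loop (topspace X) \<tau> id n e" unfolding tg_loop_def by simp
  moreover have "\<not> (\<exists>f. tg_entry (topspace X) id n e f)" unfolding tg_entry_def by auto
  moreover have "id (e 1) = v" by (simp add: e_def)
  ultimately show "v \<in> {v. \<exists>n e. tg_loop (topspace X) \<tau> id n e \<and> id (e 1) = v \<and> \<not> (\<exists>f. tg_entry (topspace X) id n e f)}"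
    by (intro CollectI exI[of _ n] exI[of _ e]) simp
qed

theorem lemma6p2:
  fixes X :: "'a topology" and \<tau> :: "'a \<Rightarrow> 'a"
  assumes "locally_compact_space X" and "Hausdorff_space X"
    and "proper_cont_map X X \<tau>" and "local_homeomorphism X X \<tau>"
  shows "dyn_topologically_free X \<tau> \<longleftrightarrow> tg_topologically_free X (topspace X) \<tau> id"
proof -
  have ct: "continuous_map X X \<tau>" using assms(4) unfolding local_homeomorphism_def by blast
  have om: "open_map X X \<tau>" using lh_open_map assms(4) .
  note B = base_set[OF ct]
  show ?thesis
  proof
    assume D: "dyn_topologically_free X \<tau>"
    have "X interior_of \<Union>((\<lambda>n. {t \<in> topspace X. (\<tau> ^^ n) t = t}) ` {1..}) = {}"
    proof (rule Baire_category_alt)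
      show "completely_metrizable_space X \<or> locally_compact_space X \<and> regular_space X"
        using assms(1,2) locally_compact_Hausdorff_or_regular by blast
      show "countable ((\<lambda>n. {t \<in> topspace X. (\<tau> ^^ n) t = t}) ` {1..})" by simp
      fix T assume "T \<in> (\<lambda>n. {t \<in> topspace X. (\<tau> ^^ n) t = t}) ` {1..}"
      then obtain n where n: "n \<ge> 1" "T = {t \<in> topspace X. (\<tau> ^^ n) t = t}" by auto
      have "closedin X T" unfolding n(2)
        using closedin_continuous_maps_eq[OF assms(2) iter_cont[OF ct, of n] continuous_map_id]
        by simp
      moreover have "X interior_of T = {}"
      proof -
        have "n \<noteq> 0" using n by simp
        then have "X interior_of {t \<in> topspace X. (\<tau> ^^ n) t = (\<tau> ^^ 0) t} = {}"
          using D unfolding dyn_topologically_free_def by blast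
        then show ?thesis unfolding n(2) by simp
      qed
      ultimately show "closedin X T \<and> X interior_of T = {}" by blast
    qed
    then show "tg_topologically_free X (topspace X) \<tau> id"
      unfolding tg_topologically_free_def B by simp
  next
    assume G: "tg_topologically_free X (topspace X) \<tau> id"
    have I: "X interior_of (\<Union>n\<in>{1..}. {t \<in> topspace X. (\<tau> ^^ n) t = t}) = {}"
      using G unfolding tg_topologically_free_def B .
    have key: "X interior_of {t \<in> topspace X. (\<tau> ^^ m) t = (\<tau> ^^ n) t} = {}" if "m < n" for m n
    proof (rule ccontr)
      let ?H = "{t \<in> topspace X. (\<tau> ^^ m) t = (\<tau> ^^ n) t}"
      assume "X interior_of ?H \<noteq> {}"
      define W where "W = (\<tau> ^^ m) ` (X interior_of ?H)"
      have Wo: "openin X W" unfolding W_def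
        using iter_open[OF om, of m] openin_interior_of unfolding open_map_def by simp
      have Wne: "W \<noteq> {}" using \<open>X interior_of ?H \<noteq> {}\<close> unfolding W_def by simp
      have "W \<subseteq> (\<Union>n\<in>{1..}. {t \<in> topspace X. (\<tau> ^^ n) t = t})"
      proof
        fix y assume "y \<in> W"
        then obtain t where t0: "t \<in> X interior_of ?H" "y = (\<tau> ^^ m) t"
          unfolding W_def by auto
        have t: "t \<in> ?H" "y = (\<tau> ^^ m) t" using t0 interior_of_subset[of X ?H] by auto
        have "(\<tau> ^^ (n - m)) y = (\<tau> ^^ (n - m + m)) t" using t(2)
          by (simp add: funpow_add)
        then have "(\<tau> ^^ (n - m)) y = (\<tau> ^^ n) t" using that by simp
        then have "(\<tau> ^^ (n - m)) y = y" using t by simp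
        moreover have "y \<in> topspace X"
        proof -
          have "(\<tau> ^^ m) t \<in> topspace X"
          proof -
            have "t \<in> topspace X" using t(1) by simp
            then show ?thesis using iter_cont[OF ct, of m] unfolding continuous_map_def Pi_iff by blast
          qed
          then show ?thesis using t(2) by simp
        qed
        ultimately show "y \<in> (\<Union>n\<in>{1..}. {t \<in> topspace X. (\<tau> ^^ n) t = t})"
          using that by (intro UN_I[of "n - m"]) simp_all
      qed
      then have "W \<subseteq> X interior_of (\<Union>n\<in>{1..}. {t \<in> topspace X. (\<tau> ^^ n) t = t})"
        using Wo by (rule interior_of_maximal)
      then show False using I Wne by simp
    qed
    show "dyn_topologically_free X \<tau>"
      unfolding dyn_topologically_free_def
    proof (intro allI impI)
      fix m n :: nat assume "m \<noteq> n"
      then show "X interior_of {t \<in> topspace X. (\<tau> ^^ m) t = (\<tau> ^^ n) t} = {}"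
      proof (cases "m < n")
        case True then show ?thesis by (rule key)
      next
        case False
        then have "n < m" using \<open>m \<noteq> n\<close> by simp
        moreover have "{t \<in> topspace X. (\<tau> ^^ m) t = (\<tau> ^^ n) t} = {t \<in> topspace X. (\<tau> ^^ n) t = (\<tau> ^^ m) t}"
          by auto
        ultimately show ?thesis using key[of n m] by simp
      qed
    qed
  qed
qed

end
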